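(* Let $C$ be a logistic circuit over Boolean variables $X_1,\dots,X_k$ with root OR gate $r$, and let $\mathcal{W}$ be the set of all wires $(n,\theta,c)$ from a child $c$ into an OR gate $n$, with parameter $\theta$. Then for every input $\mathbf{x}\in[0,1]^k$, $$g_r(\mathbf{x})=\sum_{(n,\theta,c)\in\mathcal{W}} f_r(n,\mathbf{x},c)\cdot\theta,$$ i.e. the bottom-up semantics (via $g_r$) and the top-down semantics (via global circuit flows) of logistic circuits are equivalent.
   Context: A logical circuit over Boolean variables $X_1,\dots,X_k$ is a rooted directed acyclic graph whose leaves are literals $X_i$ or $\neg X_i$ and whose inner nodes are AND gates or OR gates; each node represents a logical sentence. An AND gate is decomposable if its inputs mention pairwise disjoint sets of variables; an OR gate is deterministic if for every complete assignment at most one of its inputs is satisfied. A logistic circuit is a logical circuit whose root is an OR gate, with all AND gates decomposable and all OR gates deterministic, together with a real parameter on each input wire of each OR gate. For $\mathbf{x}\in[0,1]^k$, $\Pr_{\mathbf{x}}$ is the fully factorized distribution with $\Pr_{\mathbf{x}}(X_i=1)=x_i$, and $\Pr_{\mathbf{x}}(n)$ is the probability of the sentence of node $n$. For an OR gate $n$ with child $c$, the (local) flow is $f(n,\mathbf{x},c)=\Pr_{\mathbf{x}}(c)/\Pr_{\mathbf{x}}(n)$ (taken to be $0$ if $\Pr_{\mathbf{x}}(n)=0$). Bottom-up weight function: $g_n(\mathbf{x})=0$ for a leaf; $g_n(\mathbf{x})=\sum_i g_{c_i}(\mathbf{x})$ for an AND gate with children $c_i$; $g_n(\mathbf{x})=\sum_i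 f(n,\mathbf{x},c_i)(g_{c_i}(\mathbf{x})+\theta_i)$ for an OR gate with inputs $(c_i,\theta_i)$. Global circuit flow $f_r(n,\mathbf{x},c)$ between a node $n$ and its child $c$, defined top-down: for the root, $f_r(r,\mathbf{x},c)=f(r,\mathbf{x},c)$; for a non-root node $n$ with parents $v_1,\dots,v_m$: if $n$ is an AND gate, $f_r(n,\mathbf{x},c)=\sum_{i=1}^m f_r(v_i,\mathbf{x},n)$; if $n$ is an OR gate, $f_r(n,\mathbf{x},c)=f(n,\mathbf{x},c)\cdot\sum_{i=1}^m f_r(v_i,\mathbf{x},n)$. *)

theory Defs
  imports "HOL-Analysis.Analysis"
begin

text \<open>Each node carries a gate label:
  a literal (variable index i, polarity b; b = True means X_i, b = False means not X_i),
  an AND gate with its list of children, or an OR gate with its list of input wires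
  (child, parameter theta).\<close>

datatype 'n gate = Lit nat bool | AndG "'n list" | OrG "('n \<times> real) list"

fun children :: "'n gate \<Rightarrow> 'n set" where
  "children (Lit i b) = {}"
| "children (AndG cs) = set cs"
| "children (OrG ws) = fst ` set ws"

definition edges :: "'n set \<Rightarrow> ('n \<Rightarrow> 'n gate) \<Rightarrow> ('n \<times> 'n) set" where
  "edges N G = {(n, c). n \<in> N \<and> c \<in> children (G n)}"

inductive sat :: "('n \<Rightarrow> 'n gate) \<Rightarrow> (nat \<Rightarrow> bool) \<Rightarrow> 'n \<Rightarrow> bool"
  for G :: "'n \<Rightarrow> 'n gate" and a :: "nat \<Rightarrow> bool" where
  sat_lit: "G n = Lit i b \<Longrightarrow> a i = b \<Longrightarrow> sat G a n"
| sat_and: "G n = AndG cs \<Longrightarrow> \<forall>c\<in>set cs. sat G a c \<Longrightarrow> sat G a n"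
| sat_or: "G n = OrG ws \<Longrightarrow> (c, \<theta>) \<in> set ws \<Longrightarrow> sat G a c \<Longrightarrow> sat G a n"

definition vars :: "'n set \<Rightarrow> ('n \<Rightarrow> 'n gate) \<Rightarrow> 'n \<Rightarrow> nat set" where
  "vars N G n = {i. \<exists>m b. (n, m) \<in> (edges N G)\<^sup>* \<and> G m = Lit i b}"

definition decomposable :: "'n set \<Rightarrow> ('n \<Rightarrow> 'n gate) \<Rightarrow> 'n list \<Rightarrow> bool" where
  "decomposable N G cs \<longleftrightarrow>
     (\<forall>i<length cs. \<forall>j<length cs. i \<noteq> j \<longrightarrow> vars N G (cs ! i) \<inter> vars N G (cs ! j) = {})"

definition deterministic :: "('n \<Rightarrow> 'n gate) \<Rightarrow> ('n \<times> real) list \<Rightarrow> bool" where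
  "deterministic G ws \<longleftrightarrow>
     (\<forall>a. \<forall>i<length ws. \<forall>j<length ws.
        sat G a (fst (ws ! i)) \<and> sat G a (fst (ws ! j)) \<longrightarrow> i = j)"

definition logistic_circuit :: "nat \<Rightarrow> 'n set \<Rightarrow> ('n \<Rightarrow> 'n gate) \<Rightarrow> 'n \<Rightarrow> bool" where
  "logistic_circuit k N G r \<longleftrightarrow>
     finite N \<and> r \<in> N \<and>
     (\<forall>n\<in>N. children (G n) \<subseteq> N) \<and>
     acyclic (edges N G) \<and>
     (\<forall>n\<in>N. (r, n) \<in> (edges N G)\<^sup>*) \<and>
     (\<exists>ws. G r = OrG ws) \<and>
     (\<forall>n\<in>N. \<forall>i b. G n = Lit i b \<longrightarrow> i \<in> {1..k}) \<and>
     (\<forall>n\<in>N. \<forall>cs. G n = AndG cs \<longrightarrow> cs \<noteq> [] \<and> distinct cs \<and> decomposable N G cs) \<and>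
     (\<forall>n\<in>N. \<forall>ws. G n = OrG ws \<longrightarrow> ws \<noteq> [] \<and> distinct (map fst ws) \<and> deterministic G ws)"

definition Pr :: "nat \<Rightarrow> ('n \<Rightarrow> 'n gate) \<Rightarrow> (nat \<Rightarrow> real) \<Rightarrow> 'n \<Rightarrow> real" where
  "Pr k G x n =
     (\<Sum>a\<in>PiE {1..k} (\<lambda>_. UNIV :: bool set).
        (\<Prod>i\<in>{1..k}. if a i then x i else 1 - x i) * (if sat G a n then 1 else 0))"

definition flow :: "nat \<Rightarrow> ('n \<Rightarrow> 'n gate) \<Rightarrow> 'n \<Rightarrow> (nat \<Rightarrow> real) \<Rightarrow> 'n \<Rightarrow> real" where
  "flow k G n x c = (if Pr k G x n = 0 then 0 else Pr k G x c / Pr k G x n)"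

text \<open>The recursion is unrolled with a depth bound d; on an acyclic circuit with node set N
  every path has fewer than card N edges, so d = card N gives exactly the recursive
  definition of g_n.\<close>
fun g_aux :: "nat \<Rightarrow> ('n \<Rightarrow> 'n gate) \<Rightarrow> (nat \<Rightarrow> real) \<Rightarrow> nat \<Rightarrow> 'n \<Rightarrow> real" where
  "g_aux k G x 0 n = 0"
| "g_aux k G x (Suc d) n =
     (case G n of
        Lit i b \<Rightarrow> 0
      | AndG cs \<Rightarrow> (\<Sum>c\<leftarrow>cs. g_aux k G x d c)
      | OrG ws \<Rightarrow> (\<Sum>(c, \<theta>)\<leftarrow>ws. flow k G n x c * (g_aux k G x d c + \<theta>)))"

definition g :: "nat \<Rightarrow> 'n set \<Rightarrow> ('n \<Rightarrow> 'n gate) \<Rightarrow> (nat \<Rightarrow> real) \<Rightarrow> 'n \<Rightarrow> real" where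
  "g k N G x n = g_aux k G x (card N) n"

definition parents :: "'n set \<Rightarrow> ('n \<Rightarrow> 'n gate) \<Rightarrow> 'n \<Rightarrow> 'n set" where
  "parents N G n = {v \<in> N. n \<in> children (G v)}"

text \<open>Global circuit flow f_r(n,x,c), defined top-down from the root r; again unrolled with
  a depth bound, d = card N being enough on an acyclic rooted circuit.\<close>
fun gflow_aux :: "nat \<Rightarrow> 'n set \<Rightarrow> ('n \<Rightarrow> 'n gate) \<Rightarrow> 'n \<Rightarrow> nat \<Rightarrow> 'n \<Rightarrow> (nat \<Rightarrow> real) \<Rightarrow> 'n \<Rightarrow> real" where
  "gflow_aux k N G r 0 n x c = 0"
| "gflow_aux k N G r (Suc d) n x c =
     (if n = r then flow k G r x c
      else (case G n of
              Lit i b \<Rightarrow> 0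
            | AndG cs \<Rightarrow> (\<Sum>v\<in>parents N G n. gflow_aux k N G r d v x n)
            | OrG ws \<Rightarrow> flow k G n x c * (\<Sum>v\<in>parents N G n. gflow_aux k N G r d v x n)))"

definition gflow :: "nat \<Rightarrow> 'n set \<Rightarrow> ('n \<Rightarrow> 'n gate) \<Rightarrow> 'n \<Rightarrow> 'n \<Rightarrow> (nat \<Rightarrow> real) \<Rightarrow> 'n \<Rightarrow> real" where
  "gflow k N G r n x c = gflow_aux k N G r (card N) n x c"

definition wires :: "'n set \<Rightarrow> ('n \<Rightarrow> 'n gate) \<Rightarrow> ('n \<times> real \<times> 'n) set" where
  "wires N G = {(n, \<theta>, c). n \<in> N \<and> (\<exists>ws. G n = OrG ws \<and> (c, \<theta>) \<in> set ws)}"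

end

theory Submission
  imports Defs
begin

definition desc :: "'n set \<Rightarrow> ('n \<Rightarrow> 'n gate) \<Rightarrow> 'n \<Rightarrow> 'n set" where
  "desc N G n = {m. (n,m) \<in> (edges N G)\<^sup>+}"
definition anc :: "'n set \<Rightarrow> ('n \<Rightarrow> 'n gate) \<Rightarrow> 'n \<Rightarrow> 'n set" where
  "anc N G n = {m. (m,n) \<in> (edges N G)\<^sup>+}"

lemma edges_sub: assumes "logistic_circuit k N G r" shows "edges N G \<subseteq> N \<times> N"
  using assms unfolding logistic_circuit_def edges_def by auto

lemma trancl_sub: assumes "logistic_circuit k N G r" shows "(edges N G)\<^sup>+ \<subseteq> N \<times> N"
  using trancl_subset_Sigma[OF edges_sub[OF assms]] .

lemma desc_lt:
  assumes LC: "logistic_circuit k N G r" and n: "n \<in> N" and c: "c \<in> children (G n)"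
  shows "card (desc N G c) < card (desc N G n)"
proof -
  have E: "(n,c) \<in> edges N G" using n c by (simp add: edges_def)
  have fin: "finite (desc N G n)"
  proof -
    have sub: "desc N G n \<subseteq> N" using trancl_sub[OF LC] unfolding desc_def by auto
    have "finite N" using LC unfolding logistic_circuit_def by auto
    with sub show ?thesis by (rule finite_subset)
  qed
  have "desc N G c \<subseteq> desc N G n" using E unfolding desc_def by (auto intro: trancl_into_trancl2)
  moreover have "c \<in> desc N G n" using E by (auto simp: desc_def)
  moreover have "c \<notin> desc N G c" using LC unfolding logistic_circuit_def acyclic_def desc_def by auto
  ultimately show ?thesis using fin by (metis psubsetI psubset_card_mono)
qed

lemma desc_bound:
  assumes LC: "logistic_circuit k N G r" and n: "n \<in> N"
  shows "card (desc N G n) < card N"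
proof -
  have fin: "finite N" using LC unfolding logistic_circuit_def by auto
  have "desc N G n \<subseteq> N - {n}"
    using trancl_sub[OF LC] LC unfolding logistic_circuit_def acyclic_def desc_def by auto
  then have "card (desc N G n) \<le> card (N - {n})" using fin by (simp add: card_mono)
  also have "\<dots> < card N" using fin n card_gt_0_iff[of N] by auto
  finally show ?thesis .
qed

lemma anc_lt:
  assumes LC: "logistic_circuit k N G r" and v: "v \<in> parents N G n"
  shows "card (anc N G v) < card (anc N G n)"
proof -
  have E: "(v,n) \<in> edges N G" using v by (simp add: edges_def parents_def)
  have fin: "finite (anc N G n)"
  proof -
    have sub: "anc N G n \<subseteq> N" using trancl_sub[OF LC] unfolding anc_def by auto
    have "finite N" using LC unfolding logistic_circuit_def by auto
    with sub show ?thesis by (rule finite_subset)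
  qed
  have "anc N G v \<subseteq> anc N G n" using E unfolding anc_def by (auto intro: trancl_into_trancl)
  moreover have "v \<in> anc N G n" using E by (auto simp: anc_def)
  moreover have "v \<notin> anc N G v" using LC unfolding logistic_circuit_def acyclic_def anc_def by auto
  ultimately show ?thesis using fin by (metis psubsetI psubset_card_mono)
qed

lemma anc_bound:
  assumes LC: "logistic_circuit k N G r" and n: "n \<in> N"
  shows "card (anc N G n) < card N"
proof -
  have fin: "finite N" using LC unfolding logistic_circuit_def by auto
  have "anc N G n \<subseteq> N - {n}"
    using trancl_sub[OF LC] LC unfolding logistic_circuit_def acyclic_def anc_def by auto
  then have "card (anc N G n) \<le> card (N - {n})" using fin by (simp add: card_mono)
  also have "\<dots> < card N" using fin n card_gt_0_iff[of N] by auto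
  finally show ?thesis .
qed

lemma g_stable:
  assumes LC: "logistic_circuit k N G r"
  shows "n \<in> N \<Longrightarrow> card (desc N G n) < d \<Longrightarrow> card (desc N G n) < d'
    \<Longrightarrow> g_aux k G x d n = g_aux k G x d' n"
proof (induction d arbitrary: n d')
  case 0 then show ?case by simp
next
  case (Suc d)
  then obtain d'' where d': "d' = Suc d''" by (cases d') auto
  have IH: "g_aux k G x d c = g_aux k G x d'' c" if c: "c \<in> children (G n)" for c
  proof -
    have "c \<in> N" using c Suc.prems(1) LC unfolding logistic_circuit_def by auto
    moreover have "card (desc N G c) < card (desc N G n)" using desc_lt[OF LC Suc.prems(1) c] .
    ultimately have "card (desc N G c) < d" "card (desc N G c) < d''" using Suc.prems d' by linarith+
    then show ?thesis using Suc.IH \<open>c \<in> N\<close> by blast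
  qed
  show ?case
  proof (cases "G n")
    case (Lit i b) then show ?thesis using d' by simp
  next
    case (AndG cs)
    have "sum_list (map (g_aux k G x d) cs) = sum_list (map (g_aux k G x d'') cs)"
      using IH AndG by (intro arg_cong[where f=sum_list] map_cong) auto
    then show ?thesis using AndG d' by simp
  next
    case (OrG ws)
    have "sum_list (map (\<lambda>(c,\<theta>). flow k G n x c * (g_aux k G x d c + \<theta>)) ws)
        = sum_list (map (\<lambda>(c,\<theta>). flow k G n x c * (g_aux k G x d'' c + \<theta>)) ws)"
    proof (intro arg_cong[where f=sum_list] map_cong[OF refl])
      fix p assume "p \<in> set ws"
      then have "fst p \<in> children (G n)" using OrG by auto
      then show "(\<lambda>(c,\<theta>). flow k G n x c * (g_aux k G x d c + \<theta>)) p
          = (\<lambda>(c,\<theta>). flow k G n x c * (g_aux k G x d'' c + \<theta>)) p"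
        using IH by (cases p) auto
    qed
    then show ?thesis using OrG d' by simp
  qed
qed

lemma gflow_stable:
  assumes LC: "logistic_circuit k N G r"
  shows "card (anc N G n) < d \<Longrightarrow> card (anc N G n) < d'
    \<Longrightarrow> gflow_aux k N G r d n x c = gflow_aux k N G r d' n x c"
proof (induction d arbitrary: n c d')
  case 0 then show ?case by simp
next
  case (Suc d)
  then obtain d'' where d': "d' = Suc d''" by (cases d') auto
  have IH: "(\<Sum>v\<in>parents N G n. gflow_aux k N G r d v x n)
      = (\<Sum>v\<in>parents N G n. gflow_aux k N G r d'' v x n)"
  proof (rule sum.cong[OF refl])
    fix v assume v: "v \<in> parents N G n"
    have "card (anc N G v) < card (anc N G n)" using anc_lt[OF LC v] .
    then have "card (anc N G v) < d" "card (anc N G v) < d''" using Suc.prems d' by linarith+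
    then show "gflow_aux k N G r d v x n = gflow_aux k N G r d'' v x n"
      using Suc.IH by blast
  qed
  show ?case
    using IH d' by (cases "G n") auto
qed

theorem corollary2:
  fixes k :: nat and N :: "'n set" and G :: "'n \<Rightarrow> 'n gate" and r :: 'n
    and x :: "nat \<Rightarrow> real"
  assumes "logistic_circuit k N G r"
    and "\<forall>i\<in>{1..k}. 0 \<le> x i \<and> x i \<le> 1"
  shows "g k N G x r = (\<Sum>(n, \<theta>, c)\<in>wires N G. gflow k N G r n x c * \<theta>)"
proof -
  note LC = assms(1)
  have finN: "finite N" and rN: "r \<in> N" and chN: "\<And>n. n\<in>N \<Longrightarrow> children (G n) \<subseteq> N"
    and acyc: "acyclic (edges N G)" and reach: "\<And>n. n\<in>N \<Longrightarrow> (r,n) \<in> (edges N G)\<^sup>*"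
    and rOr: "\<exists>ws. G r = OrG ws"
    and andD: "\<And>n cs. n\<in>N \<Longrightarrow> G n = AndG cs \<Longrightarrow> distinct cs"
    and orD: "\<And>n ws. n\<in>N \<Longrightarrow> G n = OrG ws \<Longrightarrow> distinct (map fst ws)"
    using LC unfolding logistic_circuit_def by auto
  obtain d where cardN: "card N = Suc d" using finN rN by (cases "card N") auto
  define gg where "gg n = g k N G x n" for n
  define w where "w n c = (case G n of OrG ws \<Rightarrow> flow k G n x c | _ \<Rightarrow> 1)" for n c
  define wsof where "wsof n = (case G n of OrG ws \<Rightarrow> ws | _ \<Rightarrow> [])" for n
  define t where "t n = (\<Sum>p\<in>set (wsof n). flow k G n x (fst p) * snd p)" for n
  define F where "F m = (if m = r then 1 else \<Sum>v\<in>parents N G m. gflow k N G r v x m)" for m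
  have finC: "finite (children (G n))" if "n \<in> N" for n
    using chN[OF that] finN finite_subset by blast
  have finP: "finite (parents N G m)" for m
    using finN unfolding parents_def by auto

  have G1: "gg n = (\<Sum>c\<in>children (G n). w n c * gg c) + t n" if n: "n \<in> N" for n
  proof -
    have st: "g_aux k G x d c = gg c" if c: "c \<in> children (G n)" for c
    proof -
      have "card (desc N G c) < card (desc N G n)" by (rule desc_lt[OF LC n c])
      moreover have "card (desc N G n) < card N" by (rule desc_bound[OF LC n])
      moreover have "c \<in> N" using chN[OF n] c by auto
      ultimately show ?thesis unfolding gg_def g_def
        using g_stable[OF LC, of c d "card N"] cardN by auto
    qed
    have gn: "gg n = g_aux k G x (Suc d) n" by (simp add: gg_def g_def cardN)
    show ?thesis
    proof (cases "G n")
      case (Lit i b) then show ?thesis by (simp add: gn t_def wsof_def)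
    next
      case (AndG cs)
      have "gg n = (\<Sum>c\<leftarrow>cs. g_aux k G x d c)" using gn AndG by simp
      also have "\<dots> = (\<Sum>c\<in>set cs. g_aux k G x d c)"
        using andD[OF n AndG] by (simp add: sum_list_distinct_conv_sum_set)
      also have "\<dots> = (\<Sum>c\<in>set cs. w n c * gg c)" using st AndG by (auto simp: w_def intro!: sum.cong)
      finally show ?thesis using AndG by (simp add: t_def wsof_def)
    next
      case (OrG ws)
      have dws: "distinct ws" and inj: "inj_on fst (set ws)" using orD[OF n OrG] by (auto simp: distinct_map)
      have "gg n = (\<Sum>(c,\<theta>)\<leftarrow>ws. flow k G n x c * (g_aux k G x d c + \<theta>))" using gn OrG by simp
      also have "\<dots> = (\<Sum>p\<in>set ws. flow k G n x (fst p) * (g_aux k G x d (fst p) + snd p))"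
        using sum_list_distinct_conv_sum_set[OF dws, of "\<lambda>p. flow k G n x (fst p) * (g_aux k G x d (fst p) + snd p)"]
        by (simp add: case_prod_beta')
      also have "\<dots> = (\<Sum>p\<in>set ws. flow k G n x (fst p) * gg (fst p)) + t n"
        unfolding t_def wsof_def OrG gate.case
        by (auto simp: sum.distrib algebra_simps OrG st intro!: sum.cong)
      also have "(\<Sum>p\<in>set ws. flow k G n x (fst p) * gg (fst p)) = (\<Sum>c\<in>fst ` set ws. flow k G n x c * gg c)"
        using sum.reindex[OF inj, of "\<lambda>c. flow k G n x c * gg c"] by simp
      finally show ?thesis using OrG by (simp add: w_def)
    qed
  qed

  have GF: "gflow k N G r n x c = w n c * F n" if n: "n \<in> N" and c: "c \<in> children (G n)" for n c
  proof -
    have st: "gflow_aux k N G r d v x n = gflow k N G r v x n" if v: "v \<in> parents N G n" for v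
    proof -
      have "card (anc N G v) < card (anc N G n)" by (rule anc_lt[OF LC v])
      moreover have "card (anc N G n) < card N" by (rule anc_bound[OF LC n])
      ultimately show ?thesis unfolding gflow_def
        using gflow_stable[OF LC, of v d "card N"] cardN by auto
    qed
    have sums: "(\<Sum>v\<in>parents N G n. gflow_aux k N G r d v x n) = (\<Sum>v\<in>parents N G n. gflow k N G r v x n)"
      using st by (rule sum.cong[OF refl])
    have gn: "gflow k N G r n x c = gflow_aux k N G r (Suc d) n x c" by (simp add: gflow_def cardN)
    show ?thesis
    proof (cases "n = r")
      case True
      then obtain ws where "G r = OrG ws" using rOr by auto
      then show ?thesis using True gn by (simp add: w_def F_def)
    next
      case False
      show ?thesis
      proof (cases "G n")
        case (Lit i b) then show ?thesis using c by simp
      next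
        case (AndG cs) then show ?thesis using gn False sums by (simp add: w_def F_def)
      next
        case (OrG ws) then show ?thesis using gn False sums by (simp add: w_def F_def)
      qed
    qed
  qed

  have parents_r: "parents N G r = {}"
  proof (rule ccontr)
    assume "parents N G r \<noteq> {}"
    then obtain v where v: "v \<in> parents N G r" by auto
    then have E: "(v,r) \<in> edges N G" by (simp add: edges_def parents_def)
    have "(r,v) \<in> (edges N G)\<^sup>*" using reach v by (simp add: parents_def)
    then have "(r,r) \<in> (edges N G)\<^sup>+" using E by (rule rtrancl_into_trancl1)
    then show False using acyc by (simp add: acyclic_def)
  qed

  have FF: "F m = (if m = r then 1 else 0) + (\<Sum>v\<in>parents N G m. w v m * F v)" if m: "m \<in> N" for m
  proof (cases "m = r")
    case True then show ?thesis using parents_r by (simp add: F_def)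
  next
    case False
    have "F m = (\<Sum>v\<in>parents N G m. gflow k N G r v x m)" using False by (simp add: F_def)
    also have "\<dots> = (\<Sum>v\<in>parents N G m. w v m * F v)"
      by (rule sum.cong[OF refl], rule GF) (auto simp: parents_def)
    finally show ?thesis using False by simp
  qed

  have A: "(\<Sum>m\<in>N. F m * gg m) = gg r + (\<Sum>m\<in>N. \<Sum>v\<in>parents N G m. w v m * F v * gg m)"
  proof -
    have "(\<Sum>m\<in>N. F m * gg m) = (\<Sum>m\<in>N. (if m = r then gg m else 0) + (\<Sum>v\<in>parents N G m. w v m * F v * gg m))"
      by (rule sum.cong[OF refl]) (simp add: FF distrib_right sum_distrib_right)
    also have "\<dots> = gg r + (\<Sum>m\<in>N. \<Sum>v\<in>parents N G m. w v m * F v * gg m)"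
      using finN rN by (simp add: sum.distrib)
    finally show ?thesis .
  qed
  have B: "(\<Sum>m\<in>N. F m * gg m) = (\<Sum>n\<in>N. \<Sum>c\<in>children (G n). F n * w n c * gg c) + (\<Sum>n\<in>N. F n * t n)"
  proof -
    have "(\<Sum>m\<in>N. F m * gg m) = (\<Sum>n\<in>N. (\<Sum>c\<in>children (G n). F n * w n c * gg c) + F n * t n)"
      by (rule sum.cong[OF refl]) (simp add: G1 distrib_left sum_distrib_left mult.assoc)
    then show ?thesis by (simp add: sum.distrib)
  qed
  have C: "(\<Sum>m\<in>N. \<Sum>v\<in>parents N G m. w v m * F v * gg m) = (\<Sum>n\<in>N. \<Sum>c\<in>children (G n). F n * w n c * gg c)"
  proof -
    have ch: "children (G n) = {c\<in>N. c \<in> children (G n)}" if "n \<in> N" for n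
      using chN[OF that] by auto
    have "(\<Sum>n\<in>N. \<Sum>c\<in>children (G n). F n * w n c * gg c) = (\<Sum>n\<in>N. \<Sum>c\<in>{c\<in>N. c \<in> children (G n)}. F n * w n c * gg c)"
      using ch by (intro sum.cong[OF refl]) auto
    also have "\<dots> = (\<Sum>c\<in>N. \<Sum>n\<in>{n\<in>N. c \<in> children (G n)}. F n * w n c * gg c)"
      using finN by (rule sum.swap_restrict[OF _ finN])
    also have "\<dots> = (\<Sum>m\<in>N. \<Sum>v\<in>parents N G m. w v m * F v * gg m)"
      by (simp add: parents_def mult.commute mult.left_commute)
    finally show ?thesis by simp
  qed
  have key: "gg r = (\<Sum>n\<in>N. F n * t n)" using A B C by linarith

  have T: "F n * t n = (\<Sum>p\<in>set (wsof n). gflow k N G r n x (fst p) * snd p)" if n: "n \<in> N" for n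
  proof (cases "G n")
    case (OrG ws)
    have "F n * t n = (\<Sum>p\<in>set ws. F n * flow k G n x (fst p) * snd p)"
      by (simp add: t_def wsof_def OrG sum_distrib_left mult.assoc)
    also have "\<dots> = (\<Sum>p\<in>set ws. gflow k N G r n x (fst p) * snd p)"
    proof (rule sum.cong[OF refl])
      fix p assume "p \<in> set ws"
      then have "fst p \<in> children (G n)" using OrG by auto
      then show "F n * flow k G n x (fst p) * snd p = gflow k N G r n x (fst p) * snd p"
        using GF[OF n] OrG by (simp add: w_def)
    qed
    finally show ?thesis by (simp add: wsof_def OrG)
  qed (simp_all add: t_def wsof_def)

  define S where "S = (SIGMA n:N. set (wsof n))"
  define h where "h = (\<lambda>(n::'n, p::'n \<times> real). (n, snd p, fst p))"
  have W: "wires N G = h ` S"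
  proof
    show "wires N G \<subseteq> h ` S"
    proof
      fix q assume "q \<in> wires N G"
      then obtain n \<theta> c ws where q: "q = (n,\<theta>,c)" "n \<in> N" "G n = OrG ws" "(c,\<theta>) \<in> set ws"
        unfolding wires_def by auto
      then have "(n,(c,\<theta>)) \<in> S" by (simp add: S_def wsof_def)
      then show "q \<in> h ` S" using q by (force simp: h_def)
    qed
  next
    show "h ` S \<subseteq> wires N G"
    proof
      fix q assume "q \<in> h ` S"
      then obtain n p where "(n,p) \<in> S" "q = h (n,p)" by auto
      then show "q \<in> wires N G"
        by (cases "G n") (auto simp: S_def wsof_def h_def wires_def)
    qed
  qed
  have injh: "inj_on h S" unfolding h_def by (auto simp: inj_on_def)
  have "(\<Sum>(n, \<theta>, c)\<in>wires N G. gflow k N G r n x c * \<theta>)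
      = (\<Sum>q\<in>S. (\<lambda>(n, \<theta>, c). gflow k N G r n x c * \<theta>) (h q))"
    unfolding W by (rule sum.reindex[OF injh, unfolded comp_def])
  also have "\<dots> = (\<Sum>(n,p)\<in>S. gflow k N G r n x (fst p) * snd p)"
    by (rule sum.cong[OF refl]) (auto simp: h_def case_prod_beta')
  also have "\<dots> = (\<Sum>n\<in>N. \<Sum>p\<in>set (wsof n). gflow k N G r n x (fst p) * snd p)"
    unfolding S_def using finN by (subst sum.Sigma) auto
  also have "\<dots> = (\<Sum>n\<in>N. F n * t n)" using T by (intro sum.cong[OF refl]) auto
  finally show ?thesis using key by (simp add: gg_def)
qed

end
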